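(* In the compulsory constrained two-facility location game described in the context, every deterministic strategyproof mechanism has approximation ratio at least $3$ under the maximum cost objective.
   Context: An instance consists of $n$ agents with private locations $x_1,\dots,x_n\in\mathbb{R}$, each served by both facilities $F_1,F_2$, and a finite multiset $A=\{a_1\le\dots\le a_m\}$ of real alternative locations. A deterministic mechanism $f$ maps each instance (reported locations and $A$) to $(y_1,y_2)$ with $y_1\in A$, $y_2\in A\setminus\{y_1\}$ (one copy removed). Agent $j$'s cost is $\max\{|y_1-x_j|,|y_2-x_j|\}$; the maximum cost is $\max_j$ of agents' costs. $f$ is strategyproof if no agent can strictly decrease her true cost by misreporting her own location, whatever the others report. The approximation ratio is the supremum over instances of $f$'s maximum cost divided by the optimal (minimum over feasible outcomes) maximum cost. *)

theory Defs
  imports Complex_Main "HOL-Library.Multiset" "HOL-Library.Extended_Real"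
begin

text \<open>An instance: reported agent locations xs (a list, agents indexed 0..n-1) and
  a finite multiset A of alternative locations.\<close>

definition valid_instance :: "real list \<Rightarrow> real multiset \<Rightarrow> bool" where
  "valid_instance xs A \<longleftrightarrow> xs \<noteq> [] \<and> size A \<ge> 2"

definition feasible :: "real multiset \<Rightarrow> real \<times> real \<Rightarrow> bool" where
  "feasible A y \<longleftrightarrow> fst y \<in># A \<and> snd y \<in># A - {# fst y #}"

definition agent_cost :: "real \<Rightarrow> real \<times> real \<Rightarrow> real" where
  "agent_cost x y = max \<bar>fst y - x\<bar> \<bar>snd y - x\<bar>"

definition max_cost :: "real list \<Rightarrow> real \<times> real \<Rightarrow> real" where
  "max_cost xs y = Max ((\<lambda>x. agent_cost x y) ` set xs)"

definition opt_cost :: "real list \<Rightarrow> real multiset \<Rightarrow> real" where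
  "opt_cost xs A = Min (max_cost xs ` {y. feasible A y})"

definition mechanism :: "(real list \<Rightarrow> real multiset \<Rightarrow> real \<times> real) \<Rightarrow> bool" where
  "mechanism f \<longleftrightarrow> (\<forall>xs A. valid_instance xs A \<longrightarrow> feasible A (f xs A))"

definition strategyproof :: "(real list \<Rightarrow> real multiset \<Rightarrow> real \<times> real) \<Rightarrow> bool" where
  "strategyproof f \<longleftrightarrow>
     (\<forall>xs A j x'. valid_instance xs A \<longrightarrow> j < length xs \<longrightarrow>
        agent_cost (xs ! j) (f xs A) \<le> agent_cost (xs ! j) (f (xs[j := x']) A))"

text \<open>Approximation ratio: supremum over valid instances of mechanism cost / optimal cost,
  computed in the extended reals (c/0 = \<infinity> for c > 0, 0/0 = 0).\<close>
definition approx_ratio :: "(real list \<Rightarrow> real multiset \<Rightarrow> real \<times> real) \<Rightarrow> ereal" where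
  "approx_ratio f = (SUP p \<in> {(xs, A). valid_instance xs A}.
      ereal (max_cost (fst p) (f (fst p) (snd p))) / ereal (opt_cost (fst p) (snd p)))"

end

theory Submission
  imports Defs
begin

definition AA :: "real multiset" where "AA = {#0, 0, 2, 2#}"

lemma feas_vals: assumes "feasible AA y" shows "fst y \<in> {0,2} \<and> snd y \<in> {0,2}"
proof -
  have "fst y \<in># AA" "snd y \<in># AA" using assms unfolding feasible_def by (auto dest: in_diffD)
  thus ?thesis by (auto simp: AA_def)
qed

lemma feas22: "feasible AA (2,2)" and feas00: "feasible AA (0,0)"
  by (auto simp: feasible_def AA_def)

lemma valid: "length xs = 2 \<Longrightarrow> valid_instance xs AA"
  by (auto simp: valid_instance_def AA_def)

lemma fin_feas: "finite {y. feasible AA y}"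
proof -
  have "{y. feasible AA y} \<subseteq> {0,2} \<times> {0,2}" using feas_vals by force
  thus ?thesis by (rule finite_subset) auto
qed

lemma max_cost_ge: "x \<in> set xs \<Longrightarrow> agent_cost x y \<le> max_cost xs y"
  unfolding max_cost_def by (rule Max_ge) auto

lemma max_cost_nonneg: "xs \<noteq> [] \<Longrightarrow> 0 \<le> max_cost xs y"
proof -
  assume "xs \<noteq> []" then obtain x where "x \<in> set xs" by (cases xs) auto
  hence "agent_cost x y \<le> max_cost xs y" by (rule max_cost_ge)
  moreover have "0 \<le> agent_cost x y" by (simp add: agent_cost_def)
  ultimately show ?thesis by linarith
qed

lemma opt_le: "feasible AA y \<Longrightarrow> opt_cost xs AA \<le> max_cost xs y"
  unfolding opt_cost_def by (rule Min_le) (auto simp: fin_feas)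

lemma opt_nonneg: "xs \<noteq> [] \<Longrightarrow> 0 \<le> opt_cost xs AA"
proof -
  assume ne: "xs \<noteq> []"
  have "opt_cost xs AA \<in> max_cost xs ` {y. feasible AA y}"
    unfolding opt_cost_def by (rule Min_in) (use fin_feas feas22 in auto)
  thus ?thesis using max_cost_nonneg[OF ne] by auto
qed

lemma max_cost_le: "(\<And>x. x \<in> set xs \<Longrightarrow> agent_cost x y \<le> c) \<Longrightarrow> xs \<noteq> [] \<Longrightarrow> max_cost xs y \<le> c"
  unfolding max_cost_def by (subst Max_le_iff) auto

lemma spD: "strategyproof f \<Longrightarrow> valid_instance xs A \<Longrightarrow> j < length xs \<Longrightarrow>
  agent_cost (xs!j) (f xs A) \<le> agent_cost (xs!j) (f (xs[j:=x']) A)"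
  unfolding strategyproof_def by blast

lemma ratio_bound:
  fixes mc opt e :: real
  assumes "mc \<ge> 3" "0 \<le> opt" "opt \<le> 1+e" "e>0"
  shows "ereal (3/(1+e)) \<le> ereal mc / ereal opt"
proof (cases "opt = 0")
  case True
  have "ereal mc / ereal 0 = \<infinity>" using assms(1)
    by (simp add: divide_ereal_def)
  thus ?thesis using True by simp
next
  case False
  hence "opt > 0" using assms by simp
  have "3/(1+e) \<le> mc/opt" using assms \<open>opt>0\<close>
    by (intro frac_le) auto
  thus ?thesis using False by simp
qed

lemma key:
  fixes f :: "real list \<Rightarrow> real multiset \<Rightarrow> real \<times> real" and e :: real
  assumes m: "mechanism f" and sp: "strategyproof f" and e: "e > 0"
  shows "\<exists>xs. length xs = 2 \<and> ereal (3/(1+e)) \<le>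
     ereal (max_cost xs (f xs AA)) / ereal (opt_cost xs AA)"
proof -
  have feas: "\<And>xs. length xs = 2 \<Longrightarrow> fst (f xs AA) \<in> {0,2} \<and> snd (f xs AA) \<in> {0,2}"
    using m valid feas_vals unfolding mechanism_def by blast
  show ?thesis
  proof (cases "f [1-e, 3] AA = (2,2)")
    case False
    let ?xs = "[1-e, 3::real]"
    have v: "fst (f ?xs AA) \<in> {0,2} \<and> snd (f ?xs AA) \<in> {0,2}" using feas[of ?xs] by simp
    have "3 \<le> agent_cost 3 (f ?xs AA)" using v False
      by (cases "f ?xs AA") (auto simp: agent_cost_def)
    also have "\<dots> \<le> max_cost ?xs (f ?xs AA)" by (rule max_cost_ge) auto
    finally have mc: "3 \<le> max_cost ?xs (f ?xs AA)" .
    have "opt_cost ?xs AA \<le> max_cost ?xs (2,2)" by (rule opt_le[OF feas22])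
    also have "\<dots> \<le> 1 + e" by (rule max_cost_le) (use e in \<open>auto simp: agent_cost_def\<close>)
    finally have o: "opt_cost ?xs AA \<le> 1+e" .
    show ?thesis
      by (rule exI[of _ ?xs]) (use ratio_bound[OF mc opt_nonneg o e] in auto)
  next
    case True
    let ?ys = "[1-e, 1+e::real]"
    have "agent_cost (?ys!1) (f ?ys AA) \<le> agent_cost (?ys!1) (f (?ys[1:=3]) AA)"
      by (rule spD[OF sp valid]) auto
    hence c1: "agent_cost (1+e) (f ?ys AA) \<le> \<bar>1 - e\<bar>" using True e
      by (simp add: agent_cost_def)
    have vy: "fst (f ?ys AA) \<in> {0,2} \<and> snd (f ?ys AA) \<in> {0,2}" using feas[of ?ys] by simp
    have fy: "f ?ys AA = (2,2)"
    proof (rule ccontr)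
      assume "f ?ys AA \<noteq> (2,2)"
      hence "agent_cost (1+e) (f ?ys AA) \<ge> 1+e" using vy e
        by (cases "f ?ys AA") (auto simp: agent_cost_def)
      thus False using c1 e by simp
    qed
    let ?zs = "[-1, 1+e::real]"
    have "agent_cost (?ys!0) (f ?ys AA) \<le> agent_cost (?ys!0) (f (?ys[0:=-1]) AA)"
      by (rule spD[OF sp valid]) auto
    hence c0: "1 + e \<le> agent_cost (1-e) (f ?zs AA)" using fy e
      by (simp add: agent_cost_def)
    have vz: "fst (f ?zs AA) \<in> {0,2} \<and> snd (f ?zs AA) \<in> {0,2}" using feas[of ?zs] by simp
    have "f ?zs AA \<noteq> (0,0)"
    proof
      assume "f ?zs AA = (0,0)"
      thus False using c0 e by (simp add: agent_cost_def)
    qed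
    hence "3 \<le> agent_cost (-1) (f ?zs AA)" using vz
      by (cases "f ?zs AA") (auto simp: agent_cost_def)
    also have "\<dots> \<le> max_cost ?zs (f ?zs AA)" by (rule max_cost_ge) auto
    finally have mc: "3 \<le> max_cost ?zs (f ?zs AA)" .
    have "opt_cost ?zs AA \<le> max_cost ?zs (0,0)" by (rule opt_le[OF feas00])
    also have "\<dots> \<le> 1 + e" by (rule max_cost_le) (use e in \<open>auto simp: agent_cost_def\<close>)
    finally have o: "opt_cost ?zs AA \<le> 1+e" .
    show ?thesis
      by (rule exI[of _ ?zs]) (use ratio_bound[OF mc opt_nonneg o e] in auto)
  qed
qed

theorem theorem3:
  fixes f :: "real list \<Rightarrow> real multiset \<Rightarrow> real \<times> real"
  assumes "mechanism f" and "strategyproof f"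
  shows "approx_ratio f \<ge> 3"
proof (rule dense_le)
  fix y :: ereal assume y: "y < 3"
  show "y \<le> approx_ratio f"
  proof (cases y)
    case (real r)
    have r: "r < 3" using y real by simp
    define e where "e = (if r \<le> 0 then 1 else (3 - r) / 3)"
    have e: "e > 0" using r by (simp add: e_def)
    have re: "r \<le> 3/(1+e)"
    proof (cases "r \<le> 0")
      case True thus ?thesis by (simp add: e_def)
    next
      case False
      hence ee: "e = (3-r)/3" by (simp add: e_def)
      have "r * (1+e) \<le> 3" unfolding ee using False r
        using mult_nonneg_nonneg[of "3-r" "3-r"] by (simp add: field_simps)
      thus ?thesis using e by (simp add: field_simps)
    qed
    obtain xs where xs: "length xs = 2" and
      b: "ereal (3/(1+e)) \<le> ereal (max_cost xs (f xs AA)) / ereal (opt_cost xs AA)"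
      using key[OF assms e] by blast
    have "ereal (max_cost xs (f xs AA)) / ereal (opt_cost xs AA) \<le> approx_ratio f"
      unfolding approx_ratio_def
      by (rule SUP_upper2[of "(xs, AA)"]) (use valid[OF xs] in auto)
    thus ?thesis using b re real by (meson ereal_less_eq(3) order_trans)
  qed (use y in auto)
qed

end
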